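(* Assume $K<\infty$. Let $\varepsilon_n\to0$ and $u_n\in L^1(a,b)$ with $\tilde E_{\varepsilon_n}(u_n)\le C_0$ for all $n$, where $\tilde E_\varepsilon(u)=\inf_{\gamma\in\mathcal M(a,b)}E_\varepsilon(u,\gamma)$. Then there is $u\in BV(a,b)$ with $\|u\|_{L^\infty(a,b)}\le K$ such that, along a subsequence, $u_n\to u$ in $L^1(a,b)$.
   Context: Fix $0<a<b<\infty$, $c_0>0$, $K\in(0,\infty)$; $f(t)=c_0\min\{t,1\}$; $I_\varepsilon(x)=(x-\varepsilon,x+\varepsilon)$; $\fint_Bh=\frac1{|B|}\int_Bh$. $\mathcal M(a,b)$ = finite signed Radon measures on $(a,b)$. $E_\varepsilon(u,\gamma)=\int_a^b|u'-g|^2dx+\frac1\varepsilon\int_a^bf\big(\varepsilon\fint_{I_\varepsilon(x)\cap(a,b)}|g|dt\big)dx$ if $u\in W^{1,1}(a,b)$, $\|u\|_{L^\infty}\le K$, $\gamma=g\mathcal L^1$ with $g\in L^1(a,b)$, $u'-g\in L^2(a,b)$; $+\infty$ otherwise. *)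

theory Defs
  imports "HOL-Analysis.Analysis"
begin

definition trunc_f :: "real \<Rightarrow> real \<Rightarrow> real" where
  "trunc_f c0 t = c0 * min t 1"

definition avg_abs :: "real \<Rightarrow> real \<Rightarrow> real \<Rightarrow> (real \<Rightarrow> real) \<Rightarrow> real \<Rightarrow> real" where
  "avg_abs a b eps g x =
     (LINT t:({x - eps<..<x + eps} \<inter> {a<..<b})|lborel. \<bar>g t\<bar>)
       / measure lborel ({x - eps<..<x + eps} \<inter> {a<..<b})"

definition W11_deriv :: "real \<Rightarrow> real \<Rightarrow> (real \<Rightarrow> real) \<Rightarrow> (real \<Rightarrow> real) \<Rightarrow> bool" where
  "W11_deriv a b u h \<longleftrightarrow>
     set_integrable lborel {a<..<b} u \<and> set_integrable lborel {a<..<b} h \<and>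
     (\<exists>c. AE x in lborel. x \<in> {a<..<b} \<longrightarrow> u x = c + (LINT t:{a<..x}|lborel. h t))"

definition admissible :: "real \<Rightarrow> real \<Rightarrow> real \<Rightarrow> (real \<Rightarrow> real) \<Rightarrow> (real \<Rightarrow> real) \<Rightarrow> (real \<Rightarrow> real) \<Rightarrow> bool" where
  "admissible a b K u g h \<longleftrightarrow>
     W11_deriv a b u h \<and>
     (AE x in lborel. x \<in> {a<..<b} \<longrightarrow> \<bar>u x\<bar> \<le> K) \<and>
     set_integrable lborel {a<..<b} g \<and>
     set_integrable lborel {a<..<b} (\<lambda>x. (h x - g x)\<^sup>2)"

text \<open>E_eps(u, g L^1); +infinity when not admissible. The weak derivative u' is
  unique a.e., so choosing it by SOME does not affect the value.\<close>
definition energy :: "real \<Rightarrow> real \<Rightarrow> real \<Rightarrow> real \<Rightarrow> real \<Rightarrow> (real \<Rightarrow> real) \<Rightarrow> (real \<Rightarrow> real) \<Rightarrow> ennreal" where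
  "energy a b c0 K eps u g =
     (if \<exists>h. admissible a b K u g h then
        (let h = (SOME h. admissible a b K u g h) in
          (\<integral>\<^sup>+ x\<in>{a<..<b}. ennreal ((h x - g x)\<^sup>2) \<partial>lborel)
          + ennreal (1 / eps) *
            (\<integral>\<^sup>+ x\<in>{a<..<b}. ennreal (trunc_f c0 (eps * avg_abs a b eps g x)) \<partial>lborel))
      else top)"

text \<open>Relaxed energy: infimum over gamma; only gamma = g L^1 with g in L^1 give finite
  values, so the infimum ranges over densities g.\<close>
definition relaxed_energy :: "real \<Rightarrow> real \<Rightarrow> real \<Rightarrow> real \<Rightarrow> real \<Rightarrow> (real \<Rightarrow> real) \<Rightarrow> ennreal" where
  "relaxed_energy a b c0 K eps u = (INF g. energy a b c0 K eps u g)"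

definition test_fun :: "real \<Rightarrow> real \<Rightarrow> (real \<Rightarrow> real) \<Rightarrow> bool" where
  "test_fun a b \<phi> \<longleftrightarrow> \<phi> C1_differentiable_on UNIV \<and>
     (\<exists>c d. a < c \<and> c \<le> d \<and> d < b \<and> (\<forall>x. x \<notin> {c..d} \<longrightarrow> \<phi> x = 0)) \<and>
     (\<forall>x. \<bar>\<phi> x\<bar> \<le> 1)"

definition BV :: "real \<Rightarrow> real \<Rightarrow> (real \<Rightarrow> real) \<Rightarrow> bool" where
  "BV a b u \<longleftrightarrow> set_integrable lborel {a<..<b} u \<and>
     (\<exists>M. \<forall>\<phi>. test_fun a b \<phi> \<longrightarrow> (LINT x:{a<..<b}|lborel. u x * deriv \<phi> x) \<le> M)"

end

theory Submission
  imports Defs "HOL-Probability.Helly_Selection"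
begin

lemma conv_int:
  fixes F :: "real \<Rightarrow> real" and a b lo hi :: real
  assumes "set_integrable lborel {a<..<b} F" "a \<le> lo" "hi \<le> b"
  shows "F integrable_on {lo..hi}"
    "integral {lo..hi} F = (LINT s|lborel. indicator {lo..hi} s * (indicator {a<..<b} s * F s))"
proof -
  define G where "G s = indicator {a<..<b} s * F s" for s
  have Gi: "integrable lborel G" using assms(1) unfolding set_integrable_def G_def by simp
  have "set_integrable lborel {lo..hi} G" unfolding set_integrable_def
    by (rule integrable_mult_indicator) (auto simp: Gi)
  note sb = set_borel_integral_eq_integral[OF this]
  have eq: "G s = F s" if "s \<in> {lo..hi} - {a,b}" for s using that assms by (auto simp: G_def indicator_def)
  show "F integrable_on {lo..hi}"
    by (rule integrable_spike[OF sb(1), of "{a,b}"]) (auto simp: eq)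
  have "integral {lo..hi} F = integral {lo..hi} G"
    by (rule integral_spike[of "{a,b}"]) (auto simp: eq)
  also have "\<dots> = (LINT s:{lo..hi}|lborel. G s)" using sb(2) by simp
  finally show "integral {lo..hi} F = (LINT s|lborel. indicator {lo..hi} s * (indicator {a<..<b} s * F s))"
    unfolding set_lebesgue_integral_def G_def by simp
qed

lemma clampK:
  fixes K p q :: real
  shows "\<bar>max (-K) (min K p) - max (-K) (min K q)\<bar> \<le> \<bar>p - q\<bar>"
  by (cases "p \<le> q") (auto simp: max_def min_def)

lemma tonelli_window:
  fixes rr :: "real \<Rightarrow> real" and e :: real
  assumes rm: "rr \<in> borel_measurable borel" and r0: "\<And>s. rr s \<ge> 0" and e: "e > 0"
  shows "(\<integral>\<^sup>+x. (\<integral>\<^sup>+s. ennreal (indicator {x - e..x + e} s * rr s) \<partial>lborel) \<partial>lborel)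
     = ennreal (2*e) * (\<integral>\<^sup>+s. ennreal (rr s) \<partial>lborel)"
proof -
  have eqf: "(\<lambda>(x::real, s::real). ennreal (indicator {x - e..x + e} s * rr s)) = (\<lambda>p. ennreal (if fst p - e \<le> snd p \<and> snd p \<le> fst p + e then rr (snd p) else 0))"
    by (auto simp: fun_eq_iff indicator_def)
  have m: "(\<lambda>(x::real, s::real). ennreal (indicator {x - e..x + e} s * rr s)) \<in> borel_measurable (lborel \<Otimes>\<^sub>M lborel)"
    unfolding eqf using rm by measurable
  have "(\<integral>\<^sup>+x. (\<integral>\<^sup>+s. ennreal (indicator {x - e..x + e} s * rr s) \<partial>lborel) \<partial>lborel)
      = (\<integral>\<^sup>+s. (\<integral>\<^sup>+x. ennreal (indicator {x - e..x + e} s * rr s) \<partial>lborel) \<partial>lborel)"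
    using lborel_pair.Fubini'[OF m] by simp
  also have "\<dots> = (\<integral>\<^sup>+s. ennreal (rr s) * ennreal (2*e) \<partial>lborel)"
  proof (rule nn_integral_cong)
    fix s :: real
    have "(\<integral>\<^sup>+x. ennreal (indicator {x - e..x + e} s * rr s) \<partial>lborel) = (\<integral>\<^sup>+x. ennreal (rr s) * indicator {s - e..s + e} x \<partial>lborel)"
      by (intro nn_integral_cong) (auto simp: indicator_def)
    also have "\<dots> = ennreal (rr s) * emeasure lborel {s - e..s + e}"
      by (rule nn_integral_cmult_indicator) simp
    also have "\<dots> = ennreal (rr s) * ennreal (2*e)" using e by simp
    finally show "(\<integral>\<^sup>+x. ennreal (indicator {x - e..x + e} s * rr s) \<partial>lborel) = ennreal (rr s) * ennreal (2*e)" .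
  qed
  also have "\<dots> = ennreal (2*e) * (\<integral>\<^sup>+s. ennreal (rr s) \<partial>lborel)"
    using rm by (subst nn_integral_multc) (auto simp: mult.commute)
  finally show ?thesis .
qed

lemma partA:
  fixes a b c0 K C0 eps :: real and u :: "real \<Rightarrow> real"
  assumes ab: "a < b" and c0: "c0 > 0" and K: "K > 0" and e: "eps > 0"
    and E: "relaxed_energy a b c0 K eps u \<le> ennreal C0"
  shows "\<exists>U \<theta>. continuous_on UNIV U \<and> (\<forall>x. \<bar>U x\<bar> \<le> K) \<and>
     (AE x in lborel. x \<in> {a<..<b} \<longrightarrow> u x = U x) \<and>
     (\<forall>x s t. x \<in> {a..b} \<longrightarrow> s \<in> {x - eps..x + eps} \<longrightarrow> t \<in> {x - eps..x + eps} \<longrightarrow> \<bar>U s - U t\<bar> \<le> \<theta> x) \<and>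
     \<theta> \<in> borel_measurable lborel \<and>
     (\<integral>\<^sup>+x\<in>{a..b}. ennreal (\<theta> x) \<partial>lborel) \<le> ennreal (eps * (2 * max K 1 * (max C0 0 + 1) / c0 + (b - a) + (max C0 0 + 1)))"
proof -
  define B where "B = max C0 0 + 1"
  have B0: "B > 0" unfolding B_def by simp
  have "ennreal C0 < ennreal B" unfolding B_def by (rule ennreal_lessI) auto
  with E have "relaxed_energy a b c0 K eps u < ennreal B" by (rule le_less_trans)
  then obtain g where eg: "energy a b c0 K eps u g < ennreal B"
    unfolding relaxed_energy_def by (auto simp: INF_less_iff)
  have ex: "\<exists>h. admissible a b K u g h"
  proof (rule ccontr)
    assume "\<not> ?thesis"
    then have "energy a b c0 K eps u g = top" unfolding energy_def by (simp only: if_False)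
    with eg show False by simp
  qed
  define h where "h = (SOME h. admissible a b K u g h)"
  have adm: "admissible a b K u g h" unfolding h_def using ex by (rule someI_ex)
  define E1 where "E1 = (\<integral>\<^sup>+x\<in>{a<..<b}. ennreal ((h x - g x)\<^sup>2) \<partial>lborel)"
  define E2 where "E2 = (\<integral>\<^sup>+x\<in>{a<..<b}. ennreal (trunc_f c0 (eps * avg_abs a b eps g x)) \<partial>lborel)"
  have en: "energy a b c0 K eps u g = E1 + ennreal (1/eps) * E2"
    unfolding energy_def h_def E1_def E2_def using ex by (simp add: Let_def)
  have E1B: "E1 \<le> ennreal B"
  proof -
    have "E1 \<le> E1 + ennreal (1/eps) * E2" by (rule add_increasing2) auto
    then show ?thesis using eg en by (metis less_imp_le order_trans)
  qed
  have E2B: "E2 \<le> ennreal (eps * B)"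
  proof -
    have "ennreal (1/eps) * E2 \<le> E1 + ennreal (1/eps) * E2" by (rule add_increasing) auto
    then have le: "ennreal (1/eps) * E2 \<le> ennreal B" using eg en by (metis less_imp_le order_trans)
    have "E2 = ennreal eps * (ennreal (1/eps) * E2)"
      using e by (simp add: mult.assoc[symmetric] ennreal_mult[symmetric])
    also have "\<dots> \<le> ennreal eps * ennreal B" by (intro mult_left_mono le) auto
    also have "\<dots> = ennreal (eps * B)" using e B0 by (simp add: ennreal_mult[symmetric])
    finally show ?thesis .
  qed
  from adm obtain c where hi: "set_integrable lborel {a<..<b} h"
    and uAE: "AE x in lborel. x \<in> {a<..<b} \<longrightarrow> u x = c + (LINT t:{a<..x}|lborel. h t)"
    and uK: "AE x in lborel. x \<in> {a<..<b} \<longrightarrow> \<bar>u x\<bar> \<le> K"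
    and gi: "set_integrable lborel {a<..<b} g"
    and r2i: "set_integrable lborel {a<..<b} (\<lambda>x. (h x - g x)\<^sup>2)"
    unfolding admissible_def W11_deriv_def by blast
  have hai: "set_integrable lborel {a<..<b} (\<lambda>x. \<bar>h x\<bar>)" using hi by (rule set_integrable_abs)
  have gai: "set_integrable lborel {a<..<b} (\<lambda>x. \<bar>g x\<bar>)" using gi by (rule set_integrable_abs)
  have rai: "set_integrable lborel {a<..<b} (\<lambda>x. \<bar>h x - g x\<bar>)"
    using set_integral_diff(1)[OF hi gi] by (rule set_integrable_abs)
  define cl where "cl y = max a (min y b)" for y
  have clc: "continuous_on UNIV cl" unfolding cl_def by (intro continuous_intros)
  have cl_in: "cl y \<in> {a..b}" for y unfolding cl_def using ab by auto
  have cl_mono: "cl y \<le> cl z" if "y \<le> z" for y z unfolding cl_def using that by auto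
  have cl_id: "cl y = y" if "y \<in> {a..b}" for y unfolding cl_def using that by auto
  define Gh where "Gh y = integral {a..y} h" for y
  define Ga where "Ga y = integral {a..y} (\<lambda>t. \<bar>h t\<bar>)" for y
  define Gr where "Gr y = integral {a..y} (\<lambda>t. \<bar>h t - g t\<bar>)" for y
  have hI: "h integrable_on {p..q}" if "a \<le> p" "q \<le> b" for p q using conv_int(1)[OF hi that] .
  have haI: "(\<lambda>t. \<bar>h t\<bar>) integrable_on {p..q}" if "a \<le> p" "q \<le> b" for p q using conv_int(1)[OF hai that] .
  have raI: "(\<lambda>t. \<bar>h t - g t\<bar>) integrable_on {p..q}" if "a \<le> p" "q \<le> b" for p q using conv_int(1)[OF rai that] .
  have gaI: "(\<lambda>t. \<bar>g t\<bar>) integrable_on {p..q}" if "a \<le> p" "q \<le> b" for p q using conv_int(1)[OF gai that] .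
  have Ghc: "continuous_on UNIV (\<lambda>x. Gh (cl x))"
    unfolding Gh_def by (rule continuous_on_compose2[OF indefinite_integral_continuous_1[OF hI] clc]) (use cl_in in auto)
  have Gac: "continuous_on UNIV (\<lambda>x. Ga (cl x))"
    unfolding Ga_def by (rule continuous_on_compose2[OF indefinite_integral_continuous_1[OF haI] clc]) (use cl_in in auto)
  have Grc: "continuous_on UNIV (\<lambda>x. Gr (cl x))"
    unfolding Gr_def by (rule continuous_on_compose2[OF indefinite_integral_continuous_1[OF raI] clc]) (use cl_in in auto)
  have Gh_diff: "Gh q - Gh p = integral {p..q} h" if "a \<le> p" "p \<le> q" "q \<le> b" for p q
    using Henstock_Kurzweil_Integration.integral_combine[of a p q h] hI[of a q] that unfolding Gh_def by simp
  have Ga_diff: "Ga q - Ga p = integral {p..q} (\<lambda>t. \<bar>h t\<bar>)" if "a \<le> p" "p \<le> q" "q \<le> b" for p q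
    using Henstock_Kurzweil_Integration.integral_combine[of a p q "\<lambda>t. \<bar>h t\<bar>"] haI[of a q] that unfolding Ga_def by simp
  have Gr_diff: "Gr q - Gr p = integral {p..q} (\<lambda>t. \<bar>h t - g t\<bar>)" if "a \<le> p" "p \<le> q" "q \<le> b" for p q
    using Henstock_Kurzweil_Integration.integral_combine[of a p q "\<lambda>t. \<bar>h t - g t\<bar>"] raI[of a q] that unfolding Gr_def by simp
  have Gh_Ga: "\<bar>Gh q - Gh p\<bar> \<le> Ga q - Ga p" if "a \<le> p" "p \<le> q" "q \<le> b" for p q
  proof -
    have "norm (integral {p..q} h) \<le> integral {p..q} (\<lambda>t. \<bar>h t\<bar>)"
      using that by (intro integral_norm_bound_integral hI haI) auto
    then show ?thesis using Gh_diff[OF that] Ga_diff[OF that] by simp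
  qed
  have Ga_mono: "Ga p \<le> Ga q" if "a \<le> p" "p \<le> q" "q \<le> b" for p q
  proof -
    have "0 \<le> integral {p..q} (\<lambda>t. \<bar>h t\<bar>)" using that by (intro integral_nonneg haI) auto
    then show ?thesis using Ga_diff[OF that] by simp
  qed
  define U0 where "U0 x = c + Gh (cl x)" for x
  define U where "U x = max (-K) (min K (U0 x))" for x
  define \<theta> where "\<theta> x = min (2*K) (Ga (cl (x + eps)) - Ga (cl (x - eps)))" for x
  have Uc: "continuous_on UNIV U" unfolding U_def U0_def by (intro continuous_intros Ghc)
  have UK: "\<bar>U x\<bar> \<le> K" for x unfolding U_def using K by auto
  have thc: "continuous_on UNIV \<theta>" unfolding \<theta>_def
    by (intro continuous_intros continuous_on_compose2[OF Gac]) auto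
  have thm': "\<theta> \<in> borel_measurable lborel" using thc by (simp add: borel_measurable_continuous_onI)
  have osc1: "\<bar>U s - U t\<bar> \<le> \<theta> x" if x: "x \<in> {a..b}" and s: "s \<in> {x - eps..x + eps}" and t: "t \<in> {x - eps..x + eps}"
    and st: "s \<le> t" for x s t
  proof -
    have p: "a \<le> cl s" "cl s \<le> cl t" "cl t \<le> b" using cl_in cl_mono st by auto
    have lo: "a \<le> cl (x - eps)" "cl (x - eps) \<le> cl s" using cl_in cl_mono s by auto
    have hi': "cl t \<le> cl (x + eps)" "cl (x + eps) \<le> b" using cl_in cl_mono t by auto
    have "\<bar>U s - U t\<bar> \<le> \<bar>U0 s - U0 t\<bar>" unfolding U_def by (rule clampK)
    also have "\<dots> = \<bar>Gh (cl t) - Gh (cl s)\<bar>" unfolding U0_def by simp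
    also have "\<dots> \<le> Ga (cl t) - Ga (cl s)" by (rule Gh_Ga[OF p])
    also have "\<dots> \<le> Ga (cl (x + eps)) - Ga (cl (x - eps))"
      using Ga_mono[of "cl t" "cl (x + eps)"] Ga_mono[of "cl (x - eps)" "cl s"] lo hi' p by linarith
    finally have 1: "\<bar>U s - U t\<bar> \<le> Ga (cl (x + eps)) - Ga (cl (x - eps))" .
    have 2: "\<bar>U s - U t\<bar> \<le> 2 * K" using UK[of s] UK[of t] by linarith
    show ?thesis unfolding \<theta>_def using 1 2 by simp
  qed
  have osc: "\<forall>x s t. x \<in> {a..b} \<longrightarrow> s \<in> {x - eps..x + eps} \<longrightarrow> t \<in> {x - eps..x + eps} \<longrightarrow> \<bar>U s - U t\<bar> \<le> \<theta> x"
  proof (intro allI impI)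
    fix x s t assume "x \<in> {a..b}" "s \<in> {x - eps..x + eps}" "t \<in> {x - eps..x + eps}"
    then show "\<bar>U s - U t\<bar> \<le> \<theta> x"
      using osc1[of x s t] osc1[of x t s] by (cases "s \<le> t") (auto simp: abs_minus_commute)
  qed
  have uU: "AE x in lborel. x \<in> {a<..<b} \<longrightarrow> u x = U x"
    using uAE uK
  proof eventually_elim
    case (elim x)
    show ?case
    proof
      assume x: "x \<in> {a<..<b}"
      have "Gh x = (LINT s|lborel. indicator {a..x} s * (indicator {a<..<b} s * h s))"
        unfolding Gh_def by (rule conv_int(2)[OF hi]) (use x in auto)
      also have "\<dots> = (LINT t:{a<..x}|lborel. h t)"
        unfolding set_lebesgue_integral_def
        by (rule integral_discrete_difference[where X="{a}"]) (use x in \<open>auto simp: indicator_def\<close>)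
      finally have "(LINT t:{a<..x}|lborel. h t) = Gh x" by simp
      then have ux: "u x = U0 x" using elim x cl_id[of x] unfolding U0_def by auto
      have "\<bar>u x\<bar> \<le> K" using elim x by auto
      then show "u x = U x" unfolding U_def ux[symmetric] by auto
    qed
  qed
  define Rr where "Rr x = Gr (cl (x + eps)) - Gr (cl (x - eps))" for x
  define th1 where "th1 x = max 0 (\<theta> x - Rr x)" for x
  define C1 where "C1 = 2 * max K 1 / c0"
  have C1p: "C1 > 0" unfolding C1_def using c0 by simp
  have Rrc: "continuous_on UNIV Rr" unfolding Rr_def
    by (intro continuous_intros continuous_on_compose2[OF Grc]) auto
  have Rrm: "Rr \<in> borel_measurable borel" using Rrc by (rule borel_measurable_continuous_onI)
  have th1m: "th1 \<in> borel_measurable borel" unfolding th1_def using Rrm thm' by simp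
  have Gr_mono: "Gr p \<le> Gr q" if "a \<le> p" "p \<le> q" "q \<le> b" for p q
  proof -
    have "0 \<le> integral {p..q} (\<lambda>t. \<bar>h t - g t\<bar>)" using that by (intro integral_nonneg raI) auto
    then show ?thesis using Gr_diff[OF that] by simp
  qed
  have Rr0: "Rr x \<ge> 0" for x
    unfolding Rr_def using Gr_mono[of "cl (x - eps)" "cl (x + eps)"] cl_in cl_mono[of "x - eps" "x + eps"] e by auto
  have th10: "th1 x \<ge> 0" for x unfolding th1_def by simp
  have split: "\<theta> x \<le> th1 x + Rr x" for x unfolding th1_def by simp
  have th1_le: "th1 x \<le> C1 * trunc_f c0 (eps * avg_abs a b eps g x)" if x: "x \<in> {a<..<b}" for x
  proof -
    define lo where "lo = cl (x - eps)"
    define hi where "hi = cl (x + eps)"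
    have lohi: "lo = max a (x - eps)" "hi = min b (x + eps)" using x e unfolding lo_def hi_def cl_def by auto
    have lh: "a \<le> lo" "lo < hi" "hi \<le> b" "hi - lo \<le> 2*eps" using x e lohi by auto
    have Rrx: "Rr x = integral {lo..hi} (\<lambda>t. \<bar>h t - g t\<bar>)"
      unfolding Rr_def lo_def[symmetric] hi_def[symmetric] using Gr_diff lh by simp
    have Gax: "Ga hi - Ga lo = integral {lo..hi} (\<lambda>t. \<bar>h t\<bar>)" using Ga_diff lh by simp
    define Gg where "Gg = integral {lo..hi} (\<lambda>t. \<bar>g t\<bar>)"
    have "integral {lo..hi} (\<lambda>t. \<bar>h t\<bar>) \<le> integral {lo..hi} (\<lambda>t. \<bar>g t\<bar> + \<bar>h t - g t\<bar>)"
    proof (rule integral_le)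
      show "(\<lambda>t. \<bar>h t\<bar>) integrable_on {lo..hi}" using lh by (intro haI) auto
      show "(\<lambda>t. \<bar>g t\<bar> + \<bar>h t - g t\<bar>) integrable_on {lo..hi}" using lh by (intro integrable_add gaI raI) auto
      show "\<bar>h t\<bar> \<le> \<bar>g t\<bar> + \<bar>h t - g t\<bar>" for t by linarith
    qed
    also have "\<dots> = Gg + Rr x" unfolding Gg_def Rrx using lh by (intro integral_add gaI raI) auto
    finally have hle: "Ga hi - Ga lo \<le> Gg + Rr x" using Gax by simp
    have Gg0: "Gg \<ge> 0" unfolding Gg_def using lh by (intro integral_nonneg gaI) auto
    have "Gg = (LINT s|lborel. indicator {lo..hi} s * (indicator {a<..<b} s * \<bar>g s\<bar>))"
      unfolding Gg_def by (rule conv_int(2)[OF gai]) (use lh in auto)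
    also have "\<dots> = (LINT t:({x - eps<..<x + eps} \<inter> {a<..<b})|lborel. \<bar>g t\<bar>)"
      unfolding set_lebesgue_integral_def
      by (rule integral_discrete_difference[where X="{lo,hi}"]) (use lohi in \<open>auto simp: indicator_def\<close>)
    finally have GgL: "Gg = (LINT t:({x - eps<..<x + eps} \<inter> {a<..<b})|lborel. \<bar>g t\<bar>)" .
    have "{x - eps<..<x + eps} \<inter> {a<..<b} = {lo<..<hi}" using lohi by auto
    then have meas: "measure lborel ({x - eps<..<x + eps} \<inter> {a<..<b}) = hi - lo" using lh by simp
    have avg: "avg_abs a b eps g x = Gg / (hi - lo)" unfolding avg_abs_def GgL[symmetric] meas ..
    have avg0: "avg_abs a b eps g x \<ge> 0" using avg Gg0 lh by simp
    have Ggle: "Gg \<le> 2 * eps * avg_abs a b eps g x"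
    proof -
      have "Gg = (hi - lo) * avg_abs a b eps g x" using avg lh by simp
      also have "\<dots> \<le> 2 * eps * avg_abs a b eps g x" using lh avg0 by (intro mult_right_mono) auto
      finally show ?thesis .
    qed
    have "th1 x \<le> min (2*K) Gg"
    proof -
      have "\<theta> x = min (2*K) (Ga hi - Ga lo)" unfolding \<theta>_def lo_def hi_def ..
      then have "\<theta> x - Rr x \<le> min (2*K) Gg" using hle Rr0[of x] by linarith
      moreover have "0 \<le> min (2*K) Gg" using K Gg0 by simp
      ultimately show ?thesis unfolding th1_def by simp
    qed
    also have "\<dots> \<le> 2 * max K 1 * min (eps * avg_abs a b eps g x) 1"
    proof (cases "eps * avg_abs a b eps g x \<le> 1")
      case True
      have "min (2*K) Gg \<le> 2 * eps * avg_abs a b eps g x" using Ggle by linarith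
      also have "\<dots> = 2 * (eps * avg_abs a b eps g x)" by simp
      also have "\<dots> \<le> 2 * max K 1 * (eps * avg_abs a b eps g x)"
        using e avg0 by (intro mult_right_mono) auto
      finally show ?thesis using True by simp
    next
      case False
      then show ?thesis by simp
    qed
    also have "\<dots> = C1 * trunc_f c0 (eps * avg_abs a b eps g x)"
      unfolding C1_def trunc_f_def using c0 by simp
    finally show ?thesis .
  qed
  have T0: "(\<integral>\<^sup>+x\<in>{a..b}. ennreal (\<theta> x) \<partial>lborel) = (\<integral>\<^sup>+x\<in>{a<..<b}. ennreal (\<theta> x) \<partial>lborel)"
  proof (rule nn_integral_cong_AE)
    show "AE x in lborel. ennreal (\<theta> x) * indicator {a..b} x = ennreal (\<theta> x) * indicator {a<..<b} x"
      using AE_lborel_singleton[of a] AE_lborel_singleton[of b] by eventually_elim (auto simp: indicator_def)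
  qed
  have T1: "(\<integral>\<^sup>+x\<in>{a<..<b}. ennreal (\<theta> x) \<partial>lborel) \<le> (\<integral>\<^sup>+x\<in>{a<..<b}. ennreal (th1 x) \<partial>lborel) + (\<integral>\<^sup>+x\<in>{a<..<b}. ennreal (Rr x) \<partial>lborel)"
  proof -
    have "(\<integral>\<^sup>+x\<in>{a<..<b}. ennreal (\<theta> x) \<partial>lborel) \<le> (\<integral>\<^sup>+x. ennreal (th1 x) * indicator {a<..<b} x + ennreal (Rr x) * indicator {a<..<b} x \<partial>lborel)"
    proof (rule nn_integral_mono)
      fix x
      have "ennreal (\<theta> x) \<le> ennreal (th1 x + Rr x)" by (rule ennreal_leI) (rule split)
      also have "\<dots> = ennreal (th1 x) + ennreal (Rr x)" using th10 Rr0 by (rule ennreal_plus)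
      finally show "ennreal (\<theta> x) * indicator {a<..<b} x \<le> ennreal (th1 x) * indicator {a<..<b} x + ennreal (Rr x) * indicator {a<..<b} x"
        by (auto simp: indicator_def)
    qed
    also have "\<dots> = (\<integral>\<^sup>+x\<in>{a<..<b}. ennreal (th1 x) \<partial>lborel) + (\<integral>\<^sup>+x\<in>{a<..<b}. ennreal (Rr x) \<partial>lborel)"
      by (rule nn_integral_add) (use th1m Rrm in auto)
    finally show ?thesis .
  qed
  have T2: "(\<integral>\<^sup>+x\<in>{a<..<b}. ennreal (th1 x) \<partial>lborel) \<le> ennreal (C1 * (eps * B))"
  proof -
    have "(\<integral>\<^sup>+x\<in>{a<..<b}. ennreal (th1 x) \<partial>lborel) = (\<integral>\<^sup>+x. ennreal C1 * (ennreal (th1 x / C1) * indicator {a<..<b} x) \<partial>lborel)"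
    proof (rule nn_integral_cong)
      fix x
      have "ennreal (th1 x) = ennreal (C1 * (th1 x / C1))" using C1p by simp
      also have "\<dots> = ennreal C1 * ennreal (th1 x / C1)" using C1p by (intro ennreal_mult') simp
      finally show "ennreal (th1 x) * indicator {a<..<b} x = ennreal C1 * (ennreal (th1 x / C1) * indicator {a<..<b} x)"
        by (simp add: mult.assoc)
    qed
    also have "\<dots> = ennreal C1 * (\<integral>\<^sup>+x. ennreal (th1 x / C1) * indicator {a<..<b} x \<partial>lborel)"
      by (rule nn_integral_cmult) (use th1m in simp)
    also have "\<dots> \<le> ennreal C1 * E2"
      unfolding E2_def
    proof (intro mult_left_mono nn_integral_mono)
      fix x
      show "ennreal (th1 x / C1) * indicator {a<..<b} x \<le> ennreal (trunc_f c0 (eps * avg_abs a b eps g x)) * indicator {a<..<b} x"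
      proof (cases "x \<in> {a<..<b}")
        case True
        have "th1 x / C1 \<le> trunc_f c0 (eps * avg_abs a b eps g x)"
          using th1_le[OF True] C1p by (simp add: divide_le_eq mult.commute)
        then show ?thesis using True by (simp add: ennreal_leI)
      qed simp
    qed simp
    also have "\<dots> \<le> ennreal C1 * ennreal (eps * B)" by (intro mult_left_mono E2B) simp
    also have "\<dots> = ennreal (C1 * (eps * B))" using C1p by (simp add: ennreal_mult')
    finally show ?thesis .
  qed
  have T3: "(\<integral>\<^sup>+x\<in>{a<..<b}. ennreal (Rr x) \<partial>lborel) \<le> ennreal (eps * ((b - a) + B))"
  proof -
    define rr where "rr s = \<bar>indicator {a<..<b} s * h s - indicator {a<..<b} s * g s\<bar>" for s
    have rr_eq: "rr s = indicator {a<..<b} s * \<bar>h s - g s\<bar>" for s by (simp add: rr_def indicator_def)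
    have hm: "(\<lambda>s. indicator {a<..<b} s * h s) \<in> borel_measurable borel"
      using hi unfolding set_integrable_def by (auto dest: borel_measurable_integrable)
    have gm: "(\<lambda>s. indicator {a<..<b} s * g s) \<in> borel_measurable borel"
      using gi unfolding set_integrable_def by (auto dest: borel_measurable_integrable)
    have rrm: "rr \<in> borel_measurable borel" unfolding rr_def using hm gm by measurable
    have rr0: "rr s \<ge> 0" for s unfolding rr_def by simp
    have rri: "integrable lborel rr" using rai unfolding set_integrable_def rr_eq by simp
    have Rrle: "ennreal (Rr x) \<le> (\<integral>\<^sup>+s. ennreal (indicator {x - eps..x + eps} s * rr s) \<partial>lborel)"
      if x: "x \<in> {a<..<b}" for x
    proof -
      define lo where "lo = cl (x - eps)"
      define hi where "hi = cl (x + eps)"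
      have lohi: "lo = max a (x - eps)" "hi = min b (x + eps)" using x e unfolding lo_def hi_def cl_def by auto
      have lh: "a \<le> lo" "lo \<le> hi" "hi \<le> b" using x e lohi by auto
      have "Rr x = integral {lo..hi} (\<lambda>t. \<bar>h t - g t\<bar>)"
        unfolding Rr_def lo_def[symmetric] hi_def[symmetric] using Gr_diff lh by simp
      also have "\<dots> = (LINT s|lborel. indicator {lo..hi} s * (indicator {a<..<b} s * \<bar>h s - g s\<bar>))"
        by (rule conv_int(2)[OF rai]) (use lh in auto)
      also have "\<dots> = (LINT s|lborel. indicator {lo..hi} s * rr s)" by (simp add: rr_eq)
      finally have Rx: "Rr x = (LINT s|lborel. indicator {lo..hi} s * rr s)" .
      have "ennreal (LINT s|lborel. indicator {lo..hi} s * rr s) = (\<integral>\<^sup>+s. ennreal (indicator {lo..hi} s * rr s) \<partial>lborel)"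
      proof (rule nn_integral_eq_integral[symmetric])
        show "integrable lborel (\<lambda>s. indicator {lo..hi} s * rr s)"
          using integrable_mult_indicator[OF _ rri, of "{lo..hi}"] by simp
      qed (auto simp: rr0)
      also have "\<dots> \<le> (\<integral>\<^sup>+s. ennreal (indicator {x - eps..x + eps} s * rr s) \<partial>lborel)"
      proof (rule nn_integral_mono)
        fix s
        have "indicator {lo..hi} s \<le> (indicator {x - eps..x + eps} s :: real)"
          using lohi by (auto simp: indicator_def)
        then show "ennreal (indicator {lo..hi} s * rr s) \<le> ennreal (indicator {x - eps..x + eps} s * rr s)"
          using rr0[of s] by (intro ennreal_leI mult_right_mono) auto
      qed
      finally show ?thesis using Rx by simp
    qed
    have "(\<integral>\<^sup>+x\<in>{a<..<b}. ennreal (Rr x) \<partial>lborel) \<le> (\<integral>\<^sup>+x. (\<integral>\<^sup>+s. ennreal (indicator {x - eps..x + eps} s * rr s) \<partial>lborel) \<partial>lborel)"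
    proof (rule nn_integral_mono)
      fix x
      show "ennreal (Rr x) * indicator {a<..<b} x \<le> (\<integral>\<^sup>+s. ennreal (indicator {x - eps..x + eps} s * rr s) \<partial>lborel)"
        using Rrle[of x] by (cases "x \<in> {a<..<b}") auto
    qed
    also have "\<dots> = ennreal (2*eps) * (\<integral>\<^sup>+s. ennreal (rr s) \<partial>lborel)"
      by (rule tonelli_window[OF rrm rr0 e])
    also have "(\<integral>\<^sup>+s. ennreal (rr s) \<partial>lborel) \<le> ennreal (((b - a) + B) / 2)"
    proof -
      define q where "q s = indicator {a<..<b} s *\<^sub>R (h s - g s)\<^sup>2" for s
      have qm: "q \<in> borel_measurable borel"
        using r2i unfolding set_integrable_def q_def by (auto dest: borel_measurable_integrable)
      have E1q: "E1 = (\<integral>\<^sup>+s. ennreal (q s) \<partial>lborel)"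
        unfolding E1_def q_def by (intro nn_integral_cong) (auto simp: indicator_def)
      have "(\<integral>\<^sup>+s. ennreal (rr s) \<partial>lborel) \<le> (\<integral>\<^sup>+s. ennreal (1/2) * (indicator {a<..<b} s + ennreal (q s)) \<partial>lborel)"
      proof (rule nn_integral_mono)
        fix s
        show "ennreal (rr s) \<le> ennreal (1/2) * (indicator {a<..<b} s + ennreal (q s))"
        proof (cases "s \<in> {a<..<b}")
          case True
          define t where "t = h s - g s"
          have "0 \<le> (\<bar>t\<bar> - 1)\<^sup>2" by simp
          then have "\<bar>t\<bar> \<le> (1 + t\<^sup>2) / 2" by (simp add: power2_diff power2_abs)
          then have "ennreal \<bar>t\<bar> \<le> ennreal (1/2 * (1 + t\<^sup>2))" by (intro ennreal_leI) simp
          also have "\<dots> = ennreal (1/2) * ennreal (1 + t\<^sup>2)" by (rule ennreal_mult') simp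
          also have "ennreal (1 + t\<^sup>2) = ennreal 1 + ennreal (t\<^sup>2)" by (rule ennreal_plus) auto
          also have "ennreal 1 = 1" by simp
          finally show ?thesis using True unfolding rr_eq q_def t_def by simp
        qed (simp add: rr_eq q_def)
      qed
      also have "\<dots> = ennreal (1/2) * ((\<integral>\<^sup>+s. indicator {a<..<b} s \<partial>lborel) + (\<integral>\<^sup>+s. ennreal (q s) \<partial>lborel))"
      proof -
        have m1: "(\<lambda>s. indicator {a<..<b} s + ennreal (q s)) \<in> borel_measurable borel" using qm by measurable
        have "(\<integral>\<^sup>+s. indicator {a<..<b} s + ennreal (q s) \<partial>lborel) = (\<integral>\<^sup>+s. indicator {a<..<b} s \<partial>lborel) + (\<integral>\<^sup>+s. ennreal (q s) \<partial>lborel)"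
          by (rule nn_integral_add) (use qm in auto)
        then show ?thesis using m1 by (subst nn_integral_cmult) auto
      qed
      also have "\<dots> = ennreal (1/2) * (ennreal (b - a) + E1)" using ab E1q by simp
      also have "\<dots> \<le> ennreal (1/2) * (ennreal (b - a) + ennreal B)" by (intro mult_left_mono add_left_mono E1B) auto
      also have "ennreal (b - a) + ennreal B = ennreal ((b - a) + B)" using ab B0 by (intro ennreal_plus[symmetric]) auto
      also have "ennreal (1/2) * ennreal ((b - a) + B) = ennreal (1/2 * ((b - a) + B))" by (rule ennreal_mult'[symmetric]) simp
      also have "1/2 * ((b - a) + B) = ((b - a) + B) / 2" by simp
      finally show ?thesis .
    qed
    then have "ennreal (2*eps) * (\<integral>\<^sup>+s. ennreal (rr s) \<partial>lborel) \<le> ennreal (2*eps) * ennreal (((b - a) + B) / 2)"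
      by (rule mult_left_mono) simp
    also have "\<dots> = ennreal (eps * ((b - a) + B))" using e by (simp add: ennreal_mult'[symmetric])
    finally show ?thesis .
  qed
  have bound: "(\<integral>\<^sup>+x\<in>{a..b}. ennreal (\<theta> x) \<partial>lborel) \<le> ennreal (eps * (2 * max K 1 * B / c0 + (b - a) + B))"
  proof -
    have "(\<integral>\<^sup>+x\<in>{a..b}. ennreal (\<theta> x) \<partial>lborel) \<le> ennreal (C1 * (eps * B)) + ennreal (eps * ((b - a) + B))"
      unfolding T0 using T1 T2 T3 by (meson add_mono order_trans)
    also have "\<dots> = ennreal (C1 * (eps * B) + eps * ((b - a) + B))"
      using C1p e B0 ab by (intro ennreal_plus[symmetric]) auto
    also have "C1 * (eps * B) + eps * ((b - a) + B) = eps * (2 * max K 1 * B / c0 + (b - a) + B)"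
      unfolding C1_def by (simp add: field_simps)
    finally show ?thesis .
  qed
  show ?thesis
    using Uc UK uU osc thm' bound unfolding B_def by blast
qed


lemma window_deriv:
  fixes U :: "real \<Rightarrow> real"
  assumes "continuous_on UNIV U" "e > 0"
  shows "((\<lambda>y. integral {y - e..y + e} U) has_real_derivative (U (x + e) - U (x - e))) (at x)"
proof -
  define p where "p = x - e - 1"
  define G where "G z = integral {p..z} U" for z
  have Gd: "(G has_real_derivative U z) (at z)" if "p < z" for z
  proof -
    have "(G has_real_derivative U z) (at z within {p..z+1})"
      unfolding G_def by (rule integral_has_real_derivative) (use assms(1) that in \<open>auto intro: continuous_on_subset\<close>)
    moreover have "at z within {p..z+1} = at z" using that by (intro at_within_Icc_at) auto
    ultimately show ?thesis by simp
  qed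
  have d1: "((\<lambda>y. G (y + e)) has_real_derivative U (x + e)) (at x)"
    by (subst DERIV_shift[symmetric]) (rule Gd, use assms(2) in \<open>simp add: p_def\<close>)
  have d2: "((\<lambda>y. G (y + - e)) has_real_derivative U (x + - e)) (at x)"
    by (subst DERIV_shift[symmetric]) (rule Gd, use assms(2) in \<open>simp add: p_def\<close>)
  have "((\<lambda>y. G (y + e) - G (y + - e)) has_real_derivative U (x + e) - U (x - e)) (at x)"
    using DERIV_diff[OF d1 d2] by simp
  then show ?thesis
  proof (rule has_field_derivative_transform_within_open[where S="{x - 1 <..< x + 1}"])
    fix y assume y: "y \<in> {x - 1<..<x + 1}"
    have "U integrable_on {p..y + e}"
      by (rule integrable_continuous_real) (use assms(1) in \<open>auto intro: continuous_on_subset\<close>)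
    then have "integral {p..y - e} U + integral {y - e..y + e} U = integral {p..y + e} U"
      using y assms(2) by (intro Henstock_Kurzweil_Integration.integral_combine) (auto simp: p_def)
    then show "G (y + e) - G (y + - e) = integral {y - e..y + e} U"
      unfolding G_def by simp
  qed auto
qed

lemma smooth:
  fixes U \<theta> :: "real \<Rightarrow> real" and a b e V K :: real
  assumes ab: "a < b" and e: "e > 0" and V: "V \<ge> 0"
    and Uc: "continuous_on UNIV U" and UK: "\<And>x. \<bar>U x\<bar> \<le> K"
    and osc: "\<And>x s t. x \<in> {a..b} \<Longrightarrow> s \<in> {x - e..x + e} \<Longrightarrow> t \<in> {x - e..x + e} \<Longrightarrow> \<bar>U s - U t\<bar> \<le> \<theta> x"
    and thM: "\<theta> \<in> borel_measurable lborel"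
    and thi: "(\<integral>\<^sup>+x\<in>{a..b}. ennreal (\<theta> x) \<partial>lborel) \<le> ennreal (e * V)"
  defines "W \<equiv> \<lambda>x. integral {x - e..x + e} U / (2*e)"
    and "D \<equiv> \<lambda>x. (U (x + e) - U (x - e)) / (2*e)"
  shows "\<And>x. (W has_real_derivative D x) (at x)" and "continuous_on UNIV D"
    and "\<And>x. \<bar>W x\<bar> \<le> K" and "continuous_on UNIV W"
    and "integral {a..b} (\<lambda>x. \<bar>D x\<bar>) \<le> V/2"
    and "(LINT x:{a<..<b}|lborel. \<bar>U x - W x\<bar>) \<le> e * V"
proof -
  show Wd: "(W has_real_derivative D x) (at x)" for x
    unfolding W_def D_def by (intro DERIV_cdivide window_deriv Uc e)
  show Dc: "continuous_on UNIV D"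
    unfolding D_def using e by (intro continuous_intros continuous_on_compose2[OF Uc]) auto
  show "\<bar>W x\<bar> \<le> K" for x
  proof -
    have "norm (integral {x - e..x + e} U) \<le> K * ((x + e) - (x - e))"
      using e UK by (intro integral_bound continuous_on_subset[OF Uc]) auto
    then show ?thesis using e unfolding W_def by (simp add: field_simps abs_divide)
  qed
  show Wc: "continuous_on UNIV W"
    using Wd by (intro continuous_at_imp_continuous_on) (auto intro: DERIV_isCont)
  have th0: "\<theta> x \<ge> 0" if "x \<in> {a..b}" for x
    using osc[OF that, of x x] e by auto
  have Db: "\<bar>D x\<bar> \<le> \<theta> x / (2*e)" if "x \<in> {a..b}" for x
    using osc[OF that, of "x+e" "x-e"] e unfolding D_def by (simp add: abs_divide divide_right_mono)
  have "(\<integral>\<^sup>+x\<in>{a..b}. ennreal \<bar>D x\<bar> \<partial>lborel) \<le> (\<integral>\<^sup>+x\<in>{a..b}. ennreal (1/(2*e)) * ennreal (\<theta> x) \<partial>lborel)"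
  proof (rule nn_integral_mono)
    fix x show "ennreal \<bar>D x\<bar> * indicator {a..b} x \<le> ennreal (1 / (2 * e)) * ennreal (\<theta> x) * indicator {a..b} x"
    proof (cases "x \<in> {a..b}")
      case True
      then have "ennreal \<bar>D x\<bar> \<le> ennreal (1 / (2 * e) * \<theta> x)"
        using Db[OF True] by (intro ennreal_leI) simp
      also have "ennreal (1 / (2 * e) * \<theta> x) = ennreal (1 / (2 * e)) * ennreal (\<theta> x)"
        using e by (intro ennreal_mult') simp
      finally show ?thesis using True by simp
    qed simp
  qed
  also have "\<dots> = ennreal (1/(2*e)) * (\<integral>\<^sup>+x\<in>{a..b}. ennreal (\<theta> x) \<partial>lborel)"
    by (subst nn_integral_cmult[symmetric]) (use thM in \<open>auto simp: mult.assoc\<close>)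
  also have "\<dots> \<le> ennreal (1/(2*e)) * ennreal (e * V)"
    by (intro mult_left_mono thi) auto
  also have "\<dots> = ennreal (V/2)"
    using e by (subst ennreal_mult'[symmetric]) (auto simp: field_simps)
  finally have DI: "(\<integral>\<^sup>+x\<in>{a..b}. ennreal \<bar>D x\<bar> \<partial>lborel) \<le> ennreal (V/2)" .
  have Dm: "D \<in> borel_measurable borel" using Dc by (rule borel_measurable_continuous_onI)
  have "(\<integral>\<^sup>+x\<in>{a..b}. ennreal \<bar>D x\<bar> \<partial>lborel) = ennreal (integral {a..b} (\<lambda>x. \<bar>D x\<bar>))"
    using DI Dm by (intro set_nn_integral_lborel_eq_integral)
      (auto simp: set_borel_measurable_def less_top[symmetric] top_unique intro: le_less_trans)
  with DI V show "integral {a..b} (\<lambda>x. \<bar>D x\<bar>) \<le> V/2" by simp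
  have UW: "\<bar>U x - W x\<bar> \<le> \<theta> x" if x: "x \<in> {a..b}" for x
  proof -
    have c: "((\<lambda>s. U x) has_integral (2*e) * U x) {x - e..x + e}"
      using has_integral_const_real[of "U x" "x-e" "x+e"] e by simp
    have "((\<lambda>s. U x - U s) has_integral (2*e) * U x - integral {x - e..x + e} U) {x - e..x + e}"
      by (intro has_integral_diff c integrable_integral integrable_continuous_real continuous_on_subset[OF Uc]) auto
    then have eq: "integral {x - e..x + e} (\<lambda>s. U x - U s) = (2*e) * U x - integral {x - e..x + e} U"
      by (rule integral_unique)
    have "norm (integral {x - e..x + e} (\<lambda>s. U x - U s)) \<le> \<theta> x * ((x + e) - (x - e))"
      using e osc[OF x] by (intro integral_bound) (auto intro!: continuous_intros continuous_on_subset[OF Uc])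
    then have "\<bar>(2*e) * U x - integral {x - e..x + e} U\<bar> \<le> \<theta> x * (2 * e)" by (simp add: eq)
    then have "\<bar>((2*e) * U x - integral {x - e..x + e} U) / (2*e)\<bar> \<le> \<theta> x"
      using e by (simp add: abs_divide field_simps)
    moreover have "((2*e) * U x - integral {x - e..x + e} U) / (2*e) = U x - W x"
      using e unfolding W_def by (simp add: field_simps)
    ultimately show ?thesis by simp
  qed
  have Um: "U \<in> borel_measurable borel" using Uc by (rule borel_measurable_continuous_onI)
  have Wm: "W \<in> borel_measurable borel" using Wc by (rule borel_measurable_continuous_onI)
  have "(LINT x:{a<..<b}|lborel. \<bar>U x - W x\<bar>) = enn2real (\<integral>\<^sup>+x. ennreal (indicator {a<..<b} x *\<^sub>R \<bar>U x - W x\<bar>) \<partial>lborel)"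
    unfolding set_lebesgue_integral_def using Um Wm by (intro integral_eq_nn_integral) auto
  also have "\<dots> \<le> enn2real (\<integral>\<^sup>+x\<in>{a..b}. ennreal (\<theta> x) \<partial>lborel)"
  proof (rule enn2real_mono)
    show "(\<integral>\<^sup>+x. ennreal (indicator {a<..<b} x *\<^sub>R \<bar>U x - W x\<bar>) \<partial>lborel) \<le> (\<integral>\<^sup>+x\<in>{a..b}. ennreal (\<theta> x) \<partial>lborel)"
      by (rule nn_integral_mono) (auto simp: UW ennreal_leI split: split_indicator)
    show "(\<integral>\<^sup>+x\<in>{a..b}. ennreal (\<theta> x) \<partial>lborel) < top"
      using thi by (auto simp: less_top[symmetric] top_unique intro: le_less_trans)
  qed
  also have "\<dots> \<le> e * V"
    using thi e V by (metis enn2real_ennreal enn2real_mono ennreal_less_top mult_nonneg_nonneg order_less_le)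
  finally show "(LINT x:{a<..<b}|lborel. \<bar>U x - W x\<bar>) \<le> e * V" .
qed

lemma mono_part:
  fixes f :: "real \<Rightarrow> real" and a b :: real
  assumes ab: "a < b" and fc: "continuous_on UNIV f" and f0: "\<And>x. f x \<ge> 0"
  defines "F \<equiv> \<lambda>x. integral {a..max a (min x b)} f"
  shows "mono F" "continuous_on UNIV F" "\<And>x. 0 \<le> F x" "\<And>x. F x \<le> integral {a..b} f"
proof -
  have fi: "f integrable_on {p..q}" for p q
    by (rule integrable_continuous_real) (rule continuous_on_subset[OF fc], auto)
  have le: "integral {a..y} f \<le> integral {a..z} f" if "y \<le> z" for y z
    using f0 fi that by (intro integral_subset_le) auto
  show "mono F" unfolding F_def
    by (rule monoI, rule le) auto
  have "continuous_on {a..b} (\<lambda>x. integral {a..x} f)"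
    by (rule indefinite_integral_continuous_1[OF fi])
  then show "continuous_on UNIV F" unfolding F_def
    by (rule continuous_on_compose2) (use ab in \<open>auto intro!: continuous_intros\<close>)
  show "0 \<le> F x" for x unfolding F_def
    using f0 by (intro integral_nonneg fi) auto
  show "F x \<le> integral {a..b} f" for x unfolding F_def
    using ab by (intro le) auto
qed

lemma helly_part:
  fixes W D :: "nat \<Rightarrow> real \<Rightarrow> real" and a b K V :: real
  assumes ab: "a < b" and V: "V \<ge> 0"
    and Wd: "\<And>n x. (W n has_real_derivative D n x) (at x)"
    and Dc: "\<And>n. continuous_on UNIV (D n)"
    and WK: "\<And>n x. \<bar>W n x\<bar> \<le> K"
    and DV: "\<And>n. integral {a..b} (\<lambda>x. \<bar>D n x\<bar>) \<le> V/2"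
  shows "\<exists>v r. strict_mono r \<and> v \<in> borel_measurable borel \<and> (\<forall>x. \<bar>v x\<bar> \<le> K + V) \<and>
     (AE x in lborel. x \<in> {a..b} \<longrightarrow> (\<lambda>k. W (r k) x) \<longlonglongrightarrow> v x)"
proof -
  define P where "P n x = integral {a..max a (min x b)} (\<lambda>t. max (D n t) 0)" for n x
  define N where "N n x = integral {a..max a (min x b)} (\<lambda>t. max (- D n t) 0)" for n x
  have cp: "continuous_on UNIV (\<lambda>t. max (D n t) 0)" for n by (intro continuous_intros Dc)
  have cn: "continuous_on UNIV (\<lambda>t. max (- D n t) 0)" for n by (intro continuous_intros Dc)
  have mp: "mono (P n)" "continuous_on UNIV (P n)" "\<And>x. 0 \<le> P n x" "\<And>x. P n x \<le> integral {a..b} (\<lambda>t. max (D n t) 0)" for n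
    using mono_part[OF ab cp[of n]] unfolding P_def by auto
  have mn: "mono (N n)" "continuous_on UNIV (N n)" "\<And>x. 0 \<le> N n x" "\<And>x. N n x \<le> integral {a..b} (\<lambda>t. max (- D n t) 0)" for n
    using mono_part[OF ab cn[of n]] unfolding N_def by auto
  have Dint: "(\<lambda>t. \<bar>D n t\<bar>) integrable_on {a..b}" for n
    by (rule integrable_continuous_real) (intro continuous_intros continuous_on_subset[OF Dc[of n]], auto)
  have ipb: "integral {a..b} (\<lambda>t. max (D n t) 0) \<le> V/2" for n
  proof -
    have "integral {a..b} (\<lambda>t. max (D n t) 0) \<le> integral {a..b} (\<lambda>t. \<bar>D n t\<bar>)"
      by (intro integral_le Dint integrable_continuous_real continuous_on_subset[OF cp]) auto
    then show ?thesis using DV[of n] by linarith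
  qed
  have inb: "integral {a..b} (\<lambda>t. max (- D n t) 0) \<le> V/2" for n
  proof -
    have "integral {a..b} (\<lambda>t. max (- D n t) 0) \<le> integral {a..b} (\<lambda>t. \<bar>D n t\<bar>)"
      by (intro integral_le Dint integrable_continuous_real continuous_on_subset[OF cn]) auto
    then show ?thesis using DV[of n] by linarith
  qed
  have Pb: "\<bar>P n x\<bar> \<le> V/2" for n x using mp(3,4)[of n x] ipb[of n] by auto
  have Nb: "\<bar>N n x\<bar> \<le> V/2" for n x using mn(3,4)[of n x] inb[of n] by auto
  have WPN: "W n x = W n a + P n x - N n x" if x: "x \<in> {a..b}" for n x
  proof -
    have "(D n has_integral (W n x - W n a)) {a..x}"
    proof (rule fundamental_theorem_of_calculus)
      show "a \<le> x" using x by auto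
      show "(W n has_vector_derivative D n t) (at t within {a..x})" for t
        using Wd[of n t] by (auto simp: has_real_derivative_iff_has_vector_derivative intro: has_vector_derivative_at_within)
    qed
    moreover have "((\<lambda>t. max (D n t) 0 - max (- D n t) 0) has_integral (P n x - N n x)) {a..x}"
      unfolding P_def N_def using x
      apply (subgoal_tac "max a (min x b) = x")
       apply (simp only:)
      by (intro has_integral_diff integrable_integral integrable_continuous_real continuous_on_subset[OF cp] continuous_on_subset[OF cn]) auto
    moreover have "(\<lambda>t. max (D n t) 0 - max (- D n t) 0) = D n" by (auto simp: fun_eq_iff)
    ultimately have "W n x - W n a = P n x - N n x" using has_integral_unique by metis
    then show ?thesis by simp
  qed
  have rc: "continuous (at_right x) (F :: real \<Rightarrow> real)" if "continuous_on UNIV F" for F x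
    by (rule continuous_on_imp_continuous_within[OF that]) auto
  from Helly_selection[of P "V/2", OF rc[OF mp(2)] mp(1) Pb]
  obtain s1 Pl where s1: "strict_mono s1" "mono Pl" "\<And>x. \<bar>Pl x\<bar> \<le> V/2"
    "\<And>x. isCont Pl x \<Longrightarrow> (\<lambda>n. P (s1 n) x) \<longlonglongrightarrow> Pl x"
    by blast
  from Helly_selection[of "\<lambda>n. N (s1 n)" "V/2", OF rc[OF mn(2)] mn(1) Nb]
  obtain s2 Nl where s2: "strict_mono s2" "mono Nl" "\<And>x. \<bar>Nl x\<bar> \<le> V/2"
    "\<And>x. isCont Nl x \<Longrightarrow> (\<lambda>n. N (s1 (s2 n)) x) \<longlonglongrightarrow> Nl x"
    by blast
  have Wb: "\<forall>k. W (s1 (s2 k)) a \<in> {-K..K}"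
  proof
    fix k
    have h: "\<bar>W (s1 (s2 k)) a\<bar> \<le> K" by (rule WK)
    show "W (s1 (s2 k)) a \<in> {-K..K}" unfolding atLeastAtMost_iff using abs_le_D1[OF h] abs_le_D2[OF h] by linarith
  qed
  obtain A s3 where s3: "A \<in> {-K..K}" "strict_mono s3" "((\<lambda>k. W (s1 (s2 k)) a) \<circ> s3) \<longlonglongrightarrow> A"
    by (rule seq_compactE[OF compact_imp_seq_compact[OF compact_Icc] Wb])
  define r where "r = (\<lambda>k. s1 (s2 (s3 k)))"
  have r: "strict_mono r" unfolding r_def by (rule strict_mono_compose[OF s1(1) strict_mono_compose[OF s2(1) s3(2)]])
  have AK: "\<bar>A\<bar> \<le> K" using s3(1) unfolding atLeastAtMost_iff by linarith
  define v where "v x = A + Pl x - Nl x" for x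
  have conv: "(\<lambda>k. W (r k) x) \<longlonglongrightarrow> v x" if x: "x \<in> {a..b}" "isCont Pl x" "isCont Nl x" for x
  proof -
    have "(\<lambda>k. P (s1 ((s2 \<circ> s3) k)) x) \<longlonglongrightarrow> Pl x"
      using LIMSEQ_subseq_LIMSEQ[OF s1(4)[OF x(2)] strict_mono_o[OF s2(1) s3(2)]] by (simp add: o_def)
    moreover have "(\<lambda>k. N (s1 (s2 (s3 k))) x) \<longlonglongrightarrow> Nl x"
      using LIMSEQ_subseq_LIMSEQ[OF s2(4)[OF x(3)] s3(2)] by (simp add: o_def)
    moreover have "(\<lambda>k. W (s1 (s2 (s3 k))) a) \<longlonglongrightarrow> A" using s3(3) by (simp add: o_def)
    ultimately have "(\<lambda>k. W (s1 (s2 (s3 k))) a + P (s1 (s2 (s3 k))) x - N (s1 (s2 (s3 k))) x) \<longlonglongrightarrow> A + Pl x - Nl x"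
      by (intro tendsto_intros) (auto simp: o_def)
    then show ?thesis unfolding r_def v_def using WPN[OF x(1)] by simp
  qed
  have "countable ({x. \<not> isCont Pl x} \<union> {x. \<not> isCont Nl x})"
    by (intro countable_Un mono_ctble_discont s1(2) s2(2))
  then have ae: "AE x in lborel. x \<notin> {x. \<not> isCont Pl x} \<union> {x. \<not> isCont Nl x}"
    by (intro AE_not_in countable_imp_null_set_lborel)
  have AEc: "AE x in lborel. x \<in> {a..b} \<longrightarrow> (\<lambda>k. W (r k) x) \<longlonglongrightarrow> v x"
    using ae by eventually_elim (use conv in blast)
  have vm: "v \<in> borel_measurable borel"
    unfolding v_def using borel_measurable_mono[OF s1(2)] borel_measurable_mono[OF s2(2)] by measurable
  have vb: "\<forall>x. \<bar>v x\<bar> \<le> K + V"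
  proof
    fix x show "\<bar>v x\<bar> \<le> K + V" unfolding v_def using AK s1(3)[of x] s2(3)[of x] by arith
  qed
  show ?thesis
    using r vm vb AEc by blast
qed

lemma ibp_bound:
  fixes W D \<phi> :: "real \<Rightarrow> real" and a b :: real
  assumes ab: "a < b" and Wd: "\<And>x. (W has_real_derivative D x) (at x)"
    and Dc: "continuous_on UNIV D" and tf: "test_fun a b \<phi>"
  shows "(LINT x:{a<..<b}|lborel. W x * deriv \<phi> x) \<le> integral {a..b} (\<lambda>x. \<bar>D x\<bar>)"
proof -
  from tf obtain c d where C1: "\<phi> C1_differentiable_on UNIV" and cd: "a < c" "c \<le> d" "d < b"
    and z: "\<And>x. x \<notin> {c..d} \<Longrightarrow> \<phi> x = 0" and ph1: "\<And>x. \<bar>\<phi> x\<bar> \<le> 1"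
    unfolding test_fun_def by blast
  define c' where "c' = (a + c) / 2"
  define d' where "d' = (d + b) / 2"
  have cd': "a < c'" "c' < c" "d < d'" "d' < b" "c' \<le> d'" using cd by (auto simp: c'_def d'_def)
  have phd: "(\<phi> has_real_derivative deriv \<phi> x) (at x)" for x
    using C1 unfolding C1_differentiable_on_eq DERIV_deriv_iff_real_differentiable by auto
  have "continuous_on UNIV (\<lambda>x. vector_derivative \<phi> (at x))"
    using C1 unfolding C1_differentiable_on_eq by auto
  moreover have "vector_derivative \<phi> (at x) = deriv \<phi> x" for x
    using phd[of x] by (intro vector_derivative_at) (simp add: has_real_derivative_iff_has_vector_derivative)
  ultimately have dc: "continuous_on UNIV (deriv \<phi>)" by simp
  have dz: "deriv \<phi> x = 0" if x: "x \<notin> {c..d}" for x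
  proof -
    define S where "S = (if x < c then {..<c} else {d<..})"
    have S: "open S" "x \<in> S" "\<And>y. y \<in> S \<Longrightarrow> \<phi> y = 0" using x z cd(2) unfolding S_def by (auto split: if_splits)
    have "((\<lambda>_. 0) has_real_derivative 0) (at x)" by simp
    then have "(\<phi> has_real_derivative 0) (at x)"
      by (rule has_field_derivative_transform_within_open[OF _ S(1,2)]) (simp add: S(3))
    then show ?thesis using phd[of x] DERIV_unique by blast
  qed
  have phc: "\<phi> c' = 0" "\<phi> d' = 0" using z cd' by auto
  have Wc: "continuous_on UNIV W" using Wd by (intro continuous_at_imp_continuous_on) (auto intro: DERIV_isCont)
  have phcont: "continuous_on UNIV \<phi>" using phd by (intro continuous_at_imp_continuous_on) (auto intro: DERIV_isCont)
  have fc: "continuous_on {c'..d'} (\<lambda>x. W x * deriv \<phi> x)"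
    by (intro continuous_intros continuous_on_subset[OF Wc] continuous_on_subset[OF dc]) auto
  have "(LINT x:{a<..<b}|lborel. W x * deriv \<phi> x) = (LINT x:{c'..d'}|lborel. W x * deriv \<phi> x)"
    unfolding set_lebesgue_integral_def
  proof (rule Bochner_Integration.integral_cong)
    fix x
    show "indicator {a<..<b} x *\<^sub>R (W x * deriv \<phi> x) = indicator {c'..d'} x *\<^sub>R (W x * deriv \<phi> x)"
    proof (cases "x \<in> {c..d}")
      case True then show ?thesis using cd' by (auto simp: indicator_def)
    next
      case False then show ?thesis by (simp add: dz)
    qed
  qed simp
  also have "\<dots> = integral {c'..d'} (\<lambda>x. W x * deriv \<phi> x)"
    by (intro set_borel_integral_eq_integral(2))
      (unfold set_integrable_def, rule borel_integrable_compact[OF compact_Icc fc])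
  finally have eq1: "(LINT x:{a<..<b}|lborel. W x * deriv \<phi> x) = integral {c'..d'} (\<lambda>x. W x * deriv \<phi> x)" .
  have "((\<lambda>x. D x * \<phi> x) has_integral (- integral {c'..d'} (\<lambda>x. W x * deriv \<phi> x))) {c'..d'}"
  proof (rule integration_by_parts[where prod="(*)" and f=W and g=\<phi>])
    show "bounded_bilinear ((*) :: real \<Rightarrow> real \<Rightarrow> real)" by (rule bounded_bilinear_mult)
    show "c' \<le> d'" by (rule cd')
    show "continuous_on {c'..d'} W" by (rule continuous_on_subset[OF Wc]) auto
    show "continuous_on {c'..d'} \<phi>" by (rule continuous_on_subset[OF phcont]) auto
    show "(W has_vector_derivative D x) (at x)" for x
      using Wd[of x] by (simp add: has_real_derivative_iff_has_vector_derivative)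
    show "(\<phi> has_vector_derivative deriv \<phi> x) (at x)" for x
      using phd[of x] by (simp add: has_real_derivative_iff_has_vector_derivative)
    show "((\<lambda>x. W x * deriv \<phi> x) has_integral
        W d' * \<phi> d' - W c' * \<phi> c' - - integral {c'..d'} (\<lambda>x. W x * deriv \<phi> x)) {c'..d'}"
      using phc by (simp add: integrable_integral integrable_continuous_real fc)
  qed
  then have eq2: "integral {c'..d'} (\<lambda>x. W x * deriv \<phi> x) = - integral {c'..d'} (\<lambda>x. D x * \<phi> x)"
    by (simp add: integral_unique)
  have Di: "(\<lambda>x. \<bar>D x\<bar>) integrable_on {p..q}" for p q
    by (intro integrable_continuous_real continuous_intros continuous_on_subset[OF Dc]) auto
  have "norm (integral {c'..d'} (\<lambda>x. D x * \<phi> x)) \<le> integral {c'..d'} (\<lambda>x. \<bar>D x\<bar>)"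
  proof (rule integral_norm_bound_integral)
    show "(\<lambda>x. D x * \<phi> x) integrable_on {c'..d'}"
      by (intro integrable_continuous_real continuous_intros continuous_on_subset[OF Dc] continuous_on_subset[OF phcont]) auto
    show "(\<lambda>x. \<bar>D x\<bar>) integrable_on {c'..d'}" by (rule Di)
    show "norm (D x * \<phi> x) \<le> \<bar>D x\<bar>" for x
      using ph1[of x] by (simp add: abs_mult mult_left_le)
  qed
  also have "\<dots> \<le> integral {a..b} (\<lambda>x. \<bar>D x\<bar>)"
    using cd' by (intro integral_subset_le Di) auto
  finally show ?thesis using eq1 eq2 by simp
qed

lemma tf_deriv:
  fixes \<phi> :: "real \<Rightarrow> real" and a b :: real
  assumes tf: "test_fun a b \<phi>"
  shows "deriv \<phi> \<in> borel_measurable borel" "\<exists>M. \<forall>x. \<bar>deriv \<phi> x\<bar> \<le> M"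
proof -
  from tf obtain c d where C1: "\<phi> C1_differentiable_on UNIV" and cd: "a < c" "c \<le> d" "d < b"
    and z: "\<And>x. x \<notin> {c..d} \<Longrightarrow> \<phi> x = 0"
    unfolding test_fun_def by blast
  have phd: "(\<phi> has_real_derivative deriv \<phi> x) (at x)" for x
    using C1 unfolding C1_differentiable_on_eq DERIV_deriv_iff_real_differentiable by auto
  have "continuous_on UNIV (\<lambda>x. vector_derivative \<phi> (at x))"
    using C1 unfolding C1_differentiable_on_eq by auto
  moreover have "vector_derivative \<phi> (at x) = deriv \<phi> x" for x
    using phd[of x] by (intro vector_derivative_at) (simp add: has_real_derivative_iff_has_vector_derivative)
  ultimately have dc: "continuous_on UNIV (deriv \<phi>)" by simp
  then show "deriv \<phi> \<in> borel_measurable borel" by (rule borel_measurable_continuous_onI)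
  have dz: "deriv \<phi> x = 0" if x: "x \<notin> {c..d}" for x
  proof -
    define S where "S = (if x < c then {..<c} else {d<..})"
    have S: "open S" "x \<in> S" "\<And>y. y \<in> S \<Longrightarrow> \<phi> y = 0" using x z cd(2) unfolding S_def by (auto split: if_splits)
    have "((\<lambda>_. 0) has_real_derivative 0) (at x)" by simp
    then have "(\<phi> has_real_derivative 0) (at x)"
      by (rule has_field_derivative_transform_within_open[OF _ S(1,2)]) (simp add: S(3))
    then show ?thesis using phd[of x] DERIV_unique by blast
  qed
  have "compact (deriv \<phi> ` {c..d})"
    by (intro compact_continuous_image continuous_on_subset[OF dc]) auto
  then obtain B where B: "\<And>y. y \<in> deriv \<phi> ` {c..d} \<Longrightarrow> norm y \<le> B"
    using compact_imp_bounded bounded_iff by metis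
  have "\<bar>deriv \<phi> x\<bar> \<le> max B 0" for x
  proof (cases "x \<in> {c..d}")
    case True then show ?thesis using B[of "deriv \<phi> x"] by auto
  next
    case False then show ?thesis by (simp add: dz)
  qed
  then show "\<exists>M. \<forall>x. \<bar>deriv \<phi> x\<bar> \<le> M" by blast
qed

lemma bdd_set_int:
  fixes f :: "real \<Rightarrow> real" and a b B :: real
  assumes "f \<in> borel_measurable borel" "\<And>x. x \<in> {a<..<b} \<Longrightarrow> \<bar>f x\<bar> \<le> B"
  shows "set_integrable lborel {a<..<b} f"
  unfolding set_integrable_def
proof (rule integrableI_bounded_set[where A="{a<..<b}" and B=B])
  show "(\<lambda>x. indicator {a<..<b} x *\<^sub>R f x) \<in> borel_measurable lborel" using assms(1) by simp
  show "AE x in lborel. x \<in> {a<..<b} \<longrightarrow> norm (indicator {a<..<b} x *\<^sub>R f x) \<le> B"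
    using assms(2) by (intro AE_I2) auto
  show "emeasure lborel {a<..<b} < \<infinity>"
    by (cases "a \<le> b") auto
qed auto

lemma partB:
  fixes a b K V :: real and eps :: "nat \<Rightarrow> real" and U \<theta> :: "nat \<Rightarrow> real \<Rightarrow> real"
  assumes ab: "a < b" and K: "K > 0" and V: "V \<ge> 0" and eps: "\<And>n. eps n > 0" and eps0: "eps \<longlonglongrightarrow> 0"
    and Uc: "\<And>n. continuous_on UNIV (U n)" and UK: "\<And>n x. \<bar>U n x\<bar> \<le> K"
    and osc: "\<And>n x s t. x \<in> {a..b} \<Longrightarrow> s \<in> {x - eps n..x + eps n} \<Longrightarrow> t \<in> {x - eps n..x + eps n} \<Longrightarrow> \<bar>U n s - U n t\<bar> \<le> \<theta> n x"
    and thM: "\<And>n. \<theta> n \<in> borel_measurable lborel"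
    and thi: "\<And>n. (\<integral>\<^sup>+x\<in>{a..b}. ennreal (\<theta> n x) \<partial>lborel) \<le> ennreal (eps n * V)"
  shows "\<exists>v r. BV a b v \<and> (AE x in lborel. x \<in> {a<..<b} \<longrightarrow> \<bar>v x\<bar> \<le> K) \<and>
           strict_mono r \<and>
           (\<lambda>k. LINT x:{a<..<b}|lborel. \<bar>U (r k) x - v x\<bar>) \<longlonglongrightarrow> 0"
proof -
  define W where "W n x = integral {x - eps n..x + eps n} (U n) / (2 * eps n)" for n x
  define D where "D n x = (U n (x + eps n) - U n (x - eps n)) / (2 * eps n)" for n x
  note sm = smooth[OF ab eps V Uc UK osc thM thi]
  have Wd: "\<And>n x. (W n has_real_derivative D n x) (at x)" using sm(1) unfolding W_def D_def by blast
  have Dc: "\<And>n. continuous_on UNIV (D n)" using sm(2) unfolding W_def D_def by blast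
  have WK: "\<And>n x. \<bar>W n x\<bar> \<le> K" using sm(3) unfolding W_def D_def by blast
  have Wc: "\<And>n. continuous_on UNIV (W n)" using sm(4) unfolding W_def D_def by blast
  have DV: "\<And>n. integral {a..b} (\<lambda>x. \<bar>D n x\<bar>) \<le> V/2" using sm(5) unfolding W_def D_def by blast
  have UW: "\<And>n. (LINT x:{a<..<b}|lborel. \<bar>U n x - W n x\<bar>) \<le> eps n * V" using sm(6) unfolding W_def D_def by blast
  obtain v r where r: "strict_mono r" and vm: "v \<in> borel_measurable borel" and vb: "\<forall>x. \<bar>v x\<bar> \<le> K + V"
    and AEc: "AE x in lborel. x \<in> {a..b} \<longrightarrow> (\<lambda>k. W (r k) x) \<longlonglongrightarrow> v x"
    using helly_part[of a b V W D K, OF ab V Wd Dc WK DV] by blast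
  have Wm: "W n \<in> borel_measurable borel" for n using Wc by (rule borel_measurable_continuous_onI)
  have Um: "U n \<in> borel_measurable borel" for n using Uc by (rule borel_measurable_continuous_onI)
  define L where "L k = (LINT x:{a<..<b}|lborel. \<bar>W (r k) x - v x\<bar>)" for k
  have L0: "L \<longlonglongrightarrow> 0"
  proof -
    have "(\<lambda>k. integral\<^sup>L lborel (\<lambda>x. indicator {a<..<b} x *\<^sub>R \<bar>W (r k) x - v x\<bar>)) \<longlonglongrightarrow> integral\<^sup>L lborel (\<lambda>x::real. 0::real)"
    proof (rule integral_dominated_convergence[where s="\<lambda>k x. indicator {a<..<b} x *\<^sub>R \<bar>W (r k) x - v x\<bar>" and w="\<lambda>x. indicator {a<..<b} x * (2 * K + V)"])
      show "(\<lambda>x. 0::real) \<in> borel_measurable lborel" by simp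
      show "(\<lambda>x. indicator {a<..<b} x *\<^sub>R \<bar>W (r k) x - v x\<bar>) \<in> borel_measurable lborel" for k
        using Wm vm by simp
      show "integrable lborel (\<lambda>x. indicator {a<..<b} x * (2 * K + V))"
      proof -
        have "set_integrable lborel {a<..<b} (\<lambda>x. 2*K+V)" by (rule bdd_set_int[where B="2*K+V"]) (use K V in auto)
        then show ?thesis unfolding set_integrable_def by (simp add: mult.commute)
      qed
      show "AE x in lborel. (\<lambda>k. indicator {a<..<b} x *\<^sub>R \<bar>W (r k) x - v x\<bar>) \<longlonglongrightarrow> 0"
        using AEc
      proof eventually_elim
        case (elim x)
        show ?case
        proof (cases "x \<in> {a<..<b}")
          case True
          then have "(\<lambda>k. W (r k) x) \<longlonglongrightarrow> v x" using elim by auto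
          then have "(\<lambda>k. \<bar>W (r k) x - v x\<bar>) \<longlonglongrightarrow> \<bar>v x - v x\<bar>" by (intro tendsto_intros)
          then show ?thesis using True by simp
        qed simp
      qed
      show "AE x in lborel. norm (indicator {a<..<b} x *\<^sub>R \<bar>W (r k) x - v x\<bar>) \<le> indicator {a<..<b} x * (2 * K + V)" for k
      proof (intro AE_I2)
        fix x
        have "\<bar>W (r k) x\<bar> \<le> K" "\<bar>v x\<bar> \<le> K + V" using WK[of "r k" x] vb by auto
        moreover have "\<bar>W (r k) x - v x\<bar> \<le> \<bar>W (r k) x\<bar> + \<bar>v x\<bar>" by (rule abs_triangle_ineq4)
        ultimately have "\<bar>W (r k) x - v x\<bar> \<le> 2 * K + V" by simp
        then show "norm (indicator {a<..<b} x *\<^sub>R \<bar>W (r k) x - v x\<bar>) \<le> indicator {a<..<b} x * (2 * K + V)"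
          by (simp add: indicator_def)
      qed
    qed
    then show ?thesis unfolding L_def set_lebesgue_integral_def by simp
  qed
  have vK: "AE x in lborel. x \<in> {a<..<b} \<longrightarrow> \<bar>v x\<bar> \<le> K"
    using AEc
  proof eventually_elim
    case (elim x)
    show ?case
    proof
      assume x: "x \<in> {a<..<b}"
      then have "(\<lambda>k. \<bar>W (r k) x\<bar>) \<longlonglongrightarrow> \<bar>v x\<bar>" using elim by (intro tendsto_rabs) auto
      then show "\<bar>v x\<bar> \<le> K" using WK by (intro LIMSEQ_le_const2) auto
    qed
  qed
  have vint: "set_integrable lborel {a<..<b} v" using bdd_set_int[OF vm] vb by blast
  have absint: "set_integrable lborel {a<..<b} (\<lambda>x. \<bar>f x - g x\<bar>)"
    if "f \<in> borel_measurable borel" "g \<in> borel_measurable borel" "\<forall>x. \<bar>f x\<bar> \<le> K + V" "\<forall>x. \<bar>g x\<bar> \<le> K + V" for f g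
  proof (rule bdd_set_int[where B="2*(K+V)"])
    show "(\<lambda>x. \<bar>f x - g x\<bar>) \<in> borel_measurable borel" using that(1,2) by simp
    fix x
    have "\<bar>f x\<bar> \<le> K + V" "\<bar>g x\<bar> \<le> K + V" using that(3,4) by auto
    moreover have "\<bar>f x - g x\<bar> \<le> \<bar>f x\<bar> + \<bar>g x\<bar>" by (rule abs_triangle_ineq4)
    ultimately show "\<bar>\<bar>f x - g x\<bar>\<bar> \<le> 2 * (K + V)" by simp
  qed
  have KV: "\<forall>x. \<bar>W n x\<bar> \<le> K + V" "\<forall>x. \<bar>U n x\<bar> \<le> K + V" for n
  proof -
    show "\<forall>x. \<bar>W n x\<bar> \<le> K + V" using WK V by (metis add_increasing2)
    show "\<forall>x. \<bar>U n x\<bar> \<le> K + V" using UK V by (metis add_increasing2)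
  qed
  have conv: "(\<lambda>k. LINT x:{a<..<b}|lborel. \<bar>U (r k) x - v x\<bar>) \<longlonglongrightarrow> 0"
  proof (rule tendsto_sandwich[where f="\<lambda>_. 0" and h="\<lambda>k. eps (r k) * V + L k"])
    show "\<forall>\<^sub>F k in sequentially. 0 \<le> (LINT x:{a<..<b}|lborel. \<bar>U (r k) x - v x\<bar>)"
      unfolding set_lebesgue_integral_def by (intro always_eventually allI Bochner_Integration.integral_nonneg) (auto simp: indicator_def)
    show "\<forall>\<^sub>F k in sequentially. (LINT x:{a<..<b}|lborel. \<bar>U (r k) x - v x\<bar>) \<le> eps (r k) * V + L k"
    proof (intro always_eventually allI)
      fix k
      have "(LINT x:{a<..<b}|lborel. \<bar>U (r k) x - v x\<bar>) \<le> (LINT x:{a<..<b}|lborel. \<bar>U (r k) x - W (r k) x\<bar> + \<bar>W (r k) x - v x\<bar>)"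
        by (intro set_integral_mono set_integral_add absint Um Wm vm KV vb) auto
      also have "\<dots> = (LINT x:{a<..<b}|lborel. \<bar>U (r k) x - W (r k) x\<bar>) + L k"
        unfolding L_def by (intro set_integral_add absint Um Wm vm KV vb)
      also have "\<dots> \<le> eps (r k) * V + L k" using UW[of "r k"] by simp
      finally show "(LINT x:{a<..<b}|lborel. \<bar>U (r k) x - v x\<bar>) \<le> eps (r k) * V + L k" .
    qed
    have "(\<lambda>k. eps (r k)) \<longlonglongrightarrow> 0" using LIMSEQ_subseq_LIMSEQ[OF eps0 r] by (simp add: o_def)
    then have "(\<lambda>k. eps (r k) * V + L k) \<longlonglongrightarrow> 0 * V + 0" using L0 by (intro tendsto_intros)
    then show "(\<lambda>k. eps (r k) * V + L k) \<longlonglongrightarrow> 0" by simp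
  qed simp
  have BVv: "BV a b v"
    unfolding BV_def
  proof (intro conjI exI allI impI)
    show "set_integrable lborel {a<..<b} v" by (rule vint)
    fix \<phi> assume tf: "test_fun a b \<phi>"
    obtain M where M: "\<And>x. \<bar>deriv \<phi> x\<bar> \<le> M" using tf_deriv(2)[OF tf] by blast
    have dm: "deriv \<phi> \<in> borel_measurable borel" by (rule tf_deriv(1)[OF tf])
    have M0: "M \<ge> 0" using M[of 0] by simp
    have int1: "set_integrable lborel {a<..<b} (\<lambda>x. f x * deriv \<phi> x)"
      if "f \<in> borel_measurable borel" "\<And>x. \<bar>f x\<bar> \<le> B" for f B
    proof (rule bdd_set_int[where B="B*M"])
      show "(\<lambda>x. f x * deriv \<phi> x) \<in> borel_measurable borel" using that(1) dm by simp
      have B0: "B \<ge> 0" using that(2)[of 0] by linarith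
      show "\<bar>f x * deriv \<phi> x\<bar> \<le> B * M" for x
        unfolding abs_mult using that(2) M M0 B0 by (intro mult_mono) auto
    qed
    have int2: "set_integrable lborel {a<..<b} (\<lambda>x. (v x - W (r k) x) * deriv \<phi> x)" for k
    proof (rule int1[where B="2*(K+V)"])
      show "(\<lambda>x. v x - W (r k) x) \<in> borel_measurable borel" using Wm vm by simp
      fix x
      have "\<bar>v x\<bar> \<le> K + V" "\<bar>W (r k) x\<bar> \<le> K + V" using vb KV by auto
      moreover have "\<bar>v x - W (r k) x\<bar> \<le> \<bar>v x\<bar> + \<bar>W (r k) x\<bar>" by (rule abs_triangle_ineq4)
      ultimately show "\<bar>v x - W (r k) x\<bar> \<le> 2 * (K + V)" by simp
    qed
    have le: "(LINT x:{a<..<b}|lborel. v x * deriv \<phi> x) \<le> V/2 + M * L k" for k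
    proof -
      have "(LINT x:{a<..<b}|lborel. v x * deriv \<phi> x) = (LINT x:{a<..<b}|lborel. W (r k) x * deriv \<phi> x + (v x - W (r k) x) * deriv \<phi> x)"
        by (simp add: algebra_simps)
      also have "\<dots> = (LINT x:{a<..<b}|lborel. W (r k) x * deriv \<phi> x) + (LINT x:{a<..<b}|lborel. (v x - W (r k) x) * deriv \<phi> x)"
      proof (rule set_integral_add(2))
        show "set_integrable lborel {a<..<b} (\<lambda>x. W (r k) x * deriv \<phi> x)"
          by (rule int1[where B=K]) (use Wm WK in auto)
        show "set_integrable lborel {a<..<b} (\<lambda>x. (v x - W (r k) x) * deriv \<phi> x)"
          by (rule int2)
      qed
      also have "(LINT x:{a<..<b}|lborel. W (r k) x * deriv \<phi> x) \<le> V/2"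
        using ibp_bound[OF ab Wd Dc tf, of "r k"] DV[of "r k"] by linarith
      also have "(LINT x:{a<..<b}|lborel. (v x - W (r k) x) * deriv \<phi> x) \<le> (LINT x:{a<..<b}|lborel. \<bar>W (r k) x - v x\<bar> * M)"
      proof (rule set_integral_mono)
        show "set_integrable lborel {a<..<b} (\<lambda>x. (v x - W (r k) x) * deriv \<phi> x)"
          by (rule int2)
        show "set_integrable lborel {a<..<b} (\<lambda>x. \<bar>W (r k) x - v x\<bar> * M)"
          using absint[OF Wm vm KV(1) vb] by simp
        show "(v x - W (r k) x) * deriv \<phi> x \<le> \<bar>W (r k) x - v x\<bar> * M" for x
        proof -
          have "(v x - W (r k) x) * deriv \<phi> x \<le> \<bar>(v x - W (r k) x) * deriv \<phi> x\<bar>" by (rule abs_ge_self)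
          also have "\<dots> = \<bar>W (r k) x - v x\<bar> * \<bar>deriv \<phi> x\<bar>" by (simp add: abs_mult abs_minus_commute)
          also have "\<dots> \<le> \<bar>W (r k) x - v x\<bar> * M" by (intro mult_left_mono M) auto
          finally show ?thesis .
        qed
      qed
      also have "(LINT x:{a<..<b}|lborel. \<bar>W (r k) x - v x\<bar> * M) = M * L k"
        unfolding L_def by simp
      finally show ?thesis by simp
    qed
    have "(\<lambda>k. V/2 + M * L k) \<longlonglongrightarrow> V/2 + M * 0" using L0 by (intro tendsto_intros)
    then show "(LINT x:{a<..<b}|lborel. v x * deriv \<phi> x) \<le> V/2"
      using le by (intro LIMSEQ_le_const) auto
  qed
  show ?thesis using BVv vK r conv by blast
qed


theorem mainTheorem16:
  fixes a b c0 K C0 :: real and eps :: "nat \<Rightarrow> real" and u :: "nat \<Rightarrow> real \<Rightarrow> real"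
  assumes "a < b" and "c0 > 0" and "K > 0"
    and "\<And>n. eps n > 0" and "eps \<longlonglongrightarrow> 0"
    and "\<And>n. set_integrable lborel {a<..<b} (u n)"
    and "\<And>n. relaxed_energy a b c0 K (eps n) (u n) \<le> ennreal C0"
  shows "\<exists>v r. BV a b v \<and> (AE x in lborel. x \<in> {a<..<b} \<longrightarrow> \<bar>v x\<bar> \<le> K) \<and>
           strict_mono r \<and>
           (\<lambda>k. LINT x:{a<..<b}|lborel. \<bar>u (r k) x - v x\<bar>) \<longlonglongrightarrow> 0"
proof -
  define V where "V = 2 * max K 1 * (max C0 0 + 1) / c0 + (b - a) + (max C0 0 + 1)"
  have V0: "V \<ge> 0"
  proof -
    have "0 \<le> 2 * max K 1 * (max C0 0 + 1) / c0" using assms(2) by simp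
    then show ?thesis unfolding V_def using assms(1) by simp
  qed
  have "\<forall>n. \<exists>U \<theta>. continuous_on UNIV U \<and> (\<forall>x. \<bar>U x\<bar> \<le> K) \<and>
     (AE x in lborel. x \<in> {a<..<b} \<longrightarrow> u n x = U x) \<and>
     (\<forall>x s t. x \<in> {a..b} \<longrightarrow> s \<in> {x - eps n..x + eps n} \<longrightarrow> t \<in> {x - eps n..x + eps n} \<longrightarrow> \<bar>U s - U t\<bar> \<le> \<theta> x) \<and>
     \<theta> \<in> borel_measurable lborel \<and>
     (\<integral>\<^sup>+x\<in>{a..b}. ennreal (\<theta> x) \<partial>lborel) \<le> ennreal (eps n * V)"
    using partA[OF assms(1,2,3) assms(4) assms(7)] unfolding V_def by blast
  then obtain U where "\<forall>n. \<exists>\<theta>. continuous_on UNIV (U n) \<and> (\<forall>x. \<bar>U n x\<bar> \<le> K) \<and>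
     (AE x in lborel. x \<in> {a<..<b} \<longrightarrow> u n x = U n x) \<and>
     (\<forall>x s t. x \<in> {a..b} \<longrightarrow> s \<in> {x - eps n..x + eps n} \<longrightarrow> t \<in> {x - eps n..x + eps n} \<longrightarrow> \<bar>U n s - U n t\<bar> \<le> \<theta> x) \<and>
     \<theta> \<in> borel_measurable lborel \<and>
     (\<integral>\<^sup>+x\<in>{a..b}. ennreal (\<theta> x) \<partial>lborel) \<le> ennreal (eps n * V)"
    by (rule choice[THEN exE]) blast
  then obtain \<theta> where U0: "\<forall>n. continuous_on UNIV (U n) \<and> (\<forall>x. \<bar>U n x\<bar> \<le> K) \<and>
     (AE x in lborel. x \<in> {a<..<b} \<longrightarrow> u n x = U n x) \<and>
     (\<forall>x s t. x \<in> {a..b} \<longrightarrow> s \<in> {x - eps n..x + eps n} \<longrightarrow> t \<in> {x - eps n..x + eps n} \<longrightarrow> \<bar>U n s - U n t\<bar> \<le> \<theta> n x) \<and>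
     \<theta> n \<in> borel_measurable lborel \<and>
     (\<integral>\<^sup>+x\<in>{a..b}. ennreal (\<theta> n x) \<partial>lborel) \<le> ennreal (eps n * V)"
    by (rule choice[THEN exE]) blast
  have U: "\<And>n. continuous_on UNIV (U n)" "\<And>n x. \<bar>U n x\<bar> \<le> K"
     "\<And>n. AE x in lborel. x \<in> {a<..<b} \<longrightarrow> u n x = U n x"
     "\<And>n x s t. x \<in> {a..b} \<Longrightarrow> s \<in> {x - eps n..x + eps n} \<Longrightarrow> t \<in> {x - eps n..x + eps n} \<Longrightarrow> \<bar>U n s - U n t\<bar> \<le> \<theta> n x"
     "\<And>n. \<theta> n \<in> borel_measurable lborel"
     "\<And>n. (\<integral>\<^sup>+x\<in>{a..b}. ennreal (\<theta> n x) \<partial>lborel) \<le> ennreal (eps n * V)"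
    using U0 by blast+
  obtain v r where vr: "BV a b v" "AE x in lborel. x \<in> {a<..<b} \<longrightarrow> \<bar>v x\<bar> \<le> K" "strict_mono r"
    "(\<lambda>k. LINT x:{a<..<b}|lborel. \<bar>U (r k) x - v x\<bar>) \<longlonglongrightarrow> 0"
    using partB[OF assms(1,3) V0 assms(4,5) U(1,2,4,5,6)] by blast
  have vm: "(\<lambda>x. indicator {a<..<b} x * v x) \<in> borel_measurable lborel"
    using vr(1) unfolding BV_def set_integrable_def by auto
  have um: "(\<lambda>x. indicator {a<..<b} x * u n x) \<in> borel_measurable lborel" for n
    using assms(6)[of n] unfolding set_integrable_def by auto
  have Um: "U n \<in> borel_measurable lborel" for n
    using U(1) by (simp add: borel_measurable_continuous_onI)
  have eq: "(LINT x:{a<..<b}|lborel. \<bar>u (r k) x - v x\<bar>) = (LINT x:{a<..<b}|lborel. \<bar>U (r k) x - v x\<bar>)" for k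
  proof -
    have "(LINT x:{a<..<b}|lborel. \<bar>u (r k) x - v x\<bar>) = (LINT x|lborel. indicator {a<..<b} x *\<^sub>R \<bar>u (r k) x - v x\<bar>)"
      by (simp add: set_lebesgue_integral_def)
    also have "\<dots> = (LINT x|lborel. indicator {a<..<b} x *\<^sub>R \<bar>U (r k) x - v x\<bar>)"
    proof (rule integral_cong_AE)
      have "(\<lambda>x. \<bar>indicator {a<..<b} x * u (r k) x - indicator {a<..<b} x * v x\<bar>) \<in> borel_measurable lborel"
        using um vm by measurable
      then show "(\<lambda>x. indicator {a<..<b} x *\<^sub>R \<bar>u (r k) x - v x\<bar>) \<in> borel_measurable lborel"
        by (rule measurable_cong[THEN iffD1, rotated]) (auto split: split_indicator)
      show "(\<lambda>x. indicator {a<..<b} x *\<^sub>R \<bar>U (r k) x - v x\<bar>) \<in> borel_measurable lborel"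
      proof -
        have "(\<lambda>x. \<bar>indicator {a<..<b} x * U (r k) x - indicator {a<..<b} x * v x\<bar>) \<in> borel_measurable lborel"
          using Um vm by measurable
        then show ?thesis
          by (rule measurable_cong[THEN iffD1, rotated]) (auto split: split_indicator)
      qed
    qed (use U(3)[of "r k"] in \<open>auto split: split_indicator\<close>)
    also have "\<dots> = (LINT x:{a<..<b}|lborel. \<bar>U (r k) x - v x\<bar>)"
      by (simp add: set_lebesgue_integral_def)
    finally show ?thesis .
  qed
  show ?thesis using vr by (intro exI[of _ v] exI[of _ r]) (simp add: eq)
qed
end
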